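(* Let $\mathcal{G}$ be a quantitative concurrent graph game with initial state $v_0$ and let $\vec c\in\mathsf{NE}_{\mathsf{PO}}(v_0)$. Then $\vec c$ is attained by a Nash equilibrium profile $P$ in $\mathcal{G}$ with a set of winners $W$ such that $\mathsf{outcome}(P)=\mu\cdot\eta^\omega$, where $\mu$ is a path of length at most $|\Omega|\cdot|V|$ that visits $F_\alpha$ for all $\alpha\in W$, and $\eta$ is a simple cycle.
   Context: A quantitative concurrent graph game is a tuple $\mathcal{G}=\langle \Omega, V, \{\mathsf{Act}_\alpha\}_{\alpha\in\Omega}, v_0, \delta, \mathsf{cost}, F\rangle$: finite players $\Omega$, finite states $V$, finite action sets (all enabled everywhere), initial state $v_0$, transition function $\delta: V\times\prod_\alpha\mathsf{Act}_\alpha\to V$, cost function giving each transition a vector in $\mathbb{N}^\Omega$, and target sets $F_\alpha\subseteq V$. $\mathsf{cost}_\alpha$ of an outcome (sequence of consecutive transitions from the initial state) is the $\alpha$-cost accumulated until $F_\alpha$ is first visited, $\infty$ if never. Strategies map histories to actions; a profile $P$ induces an outcome and cost vector $\mathsf{cost}(P)$. $P$ is a Nash equilibrium (NE) if no player can strictly decrease its own cost by unilaterally changing its strategy. An NE cost vector $\vec c$ is Pareto-optimal if no NE cost vector $\vec d\neq\vec c$ satisfies $\vec d\le\vec c$ componentwise; $\mathsf{NE}_{\mathsf{PO}}(v_0)$ is the set of Pareto-optimal NE cost vectors from $v_0$. The set of winners of a profile is the set of players whose target set is visited along its outcome. The length of a path is its number of transitions. *)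

theory Defs
  imports Main "HOL-Library.Extended_Nat"
begin

text \<open>Players are the elements of a finite type 'p
  (the set Omega), states are the elements of a finite type 'v (the set V).\<close>

record ('p, 'v, 'a) cgame =
  acts   :: "'p \<Rightarrow> 'a set"
  trans  :: "'v \<Rightarrow> ('p \<Rightarrow> 'a) \<Rightarrow> 'v"
  tcost  :: "'v \<Rightarrow> 'v \<Rightarrow> 'p \<Rightarrow> nat"
  target :: "'p \<Rightarrow> 'v set"
  init   :: 'v

definition wf_game :: "('p::finite, 'v::finite, 'a) cgame \<Rightarrow> bool" where
  "wf_game G \<longleftrightarrow> (\<forall>\<alpha>. finite (acts G \<alpha>) \<and> acts G \<alpha> \<noteq> {})"

type_synonym ('v, 'a) strategy = "'v list \<Rightarrow> 'a"
type_synonym ('p, 'v, 'a) profile = "'p \<Rightarrow> ('v, 'a) strategy"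

definition valid_strategy :: "('p, 'v, 'a) cgame \<Rightarrow> 'p \<Rightarrow> ('v, 'a) strategy \<Rightarrow> bool" where
  "valid_strategy G \<alpha> \<sigma> \<longleftrightarrow> (\<forall>h. \<sigma> h \<in> acts G \<alpha>)"

definition valid_profile :: "('p, 'v, 'a) cgame \<Rightarrow> ('p, 'v, 'a) profile \<Rightarrow> bool" where
  "valid_profile G P \<longleftrightarrow> (\<forall>\<alpha>. valid_strategy G \<alpha> (P \<alpha>))"

text \<open>History of length n (n transitions) induced by a profile from the initial state.\<close>
fun hist :: "('p, 'v, 'a) cgame \<Rightarrow> ('p, 'v, 'a) profile \<Rightarrow> nat \<Rightarrow> 'v list" where
  "hist G P 0 = [init G]"
| "hist G P (Suc n) = hist G P n @ [trans G (last (hist G P n)) (\<lambda>\<alpha>. P \<alpha> (hist G P n))]"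

definition outcome :: "('p, 'v, 'a) cgame \<Rightarrow> ('p, 'v, 'a) profile \<Rightarrow> nat \<Rightarrow> 'v" where
  "outcome G P n = last (hist G P n)"

definition play_cost :: "('p, 'v, 'a) cgame \<Rightarrow> (nat \<Rightarrow> 'v) \<Rightarrow> 'p \<Rightarrow> enat" where
  "play_cost G \<rho> \<alpha> =
     (if \<exists>n. \<rho> n \<in> target G \<alpha>
      then enat (\<Sum>i < (LEAST n. \<rho> n \<in> target G \<alpha>). tcost G (\<rho> i) (\<rho> (Suc i)) \<alpha>)
      else \<infinity>)"

definition cost :: "('p, 'v, 'a) cgame \<Rightarrow> ('p, 'v, 'a) profile \<Rightarrow> 'p \<Rightarrow> enat" where
  "cost G P = play_cost G (outcome G P)"

definition is_NE :: "('p, 'v, 'a) cgame \<Rightarrow> ('p, 'v, 'a) profile \<Rightarrow> bool" where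
  "is_NE G P \<longleftrightarrow> valid_profile G P \<and>
     (\<forall>\<alpha> \<sigma>. valid_strategy G \<alpha> \<sigma> \<longrightarrow> cost G P \<alpha> \<le> cost G (P(\<alpha> := \<sigma>)) \<alpha>)"

definition NE_costs :: "('p, 'v, 'a) cgame \<Rightarrow> ('p \<Rightarrow> enat) set" where
  "NE_costs G = {cost G P | P. is_NE G P}"

definition NE_PO :: "('p, 'v, 'a) cgame \<Rightarrow> ('p \<Rightarrow> enat) set" where
  "NE_PO G = {c \<in> NE_costs G. \<forall>d \<in> NE_costs G. d \<le> c \<longrightarrow> d = c}"

definition winners :: "('p, 'v, 'a) cgame \<Rightarrow> ('p, 'v, 'a) profile \<Rightarrow> 'p set" where
  "winners G P = {\<alpha>. \<exists>n. outcome G P n \<in> target G \<alpha>}"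

text \<open>A play equals mu . eta^omega: mu = [u_0,...,u_k] is a finite path (k transitions) and
  eta = [w_0,...,w_{m-1}] with w_0 = u_k is a simple cycle w_0 ... w_{m-1} w_0 (distinct states),
  so the play is u_0 ... u_k w_1 ... w_{m-1} w_0 w_1 ...\<close>
definition lasso :: "(nat \<Rightarrow> 'v) \<Rightarrow> 'v list \<Rightarrow> 'v list \<Rightarrow> bool" where
  "lasso \<rho> \<mu> \<eta> \<longleftrightarrow> \<mu> \<noteq> [] \<and> \<eta> \<noteq> [] \<and> distinct \<eta> \<and> hd \<eta> = last \<mu> \<and>
     (\<forall>i < length \<mu>. \<rho> i = \<mu> ! i) \<and>
     (\<forall>j. \<rho> (length \<mu> - 1 + j) = \<eta> ! (j mod length \<eta>))"

end

theory Submission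
  imports Defs
begin


definition Sm :: "('p,'v,'a) cgame \<Rightarrow> (nat \<Rightarrow> 'v) \<Rightarrow> nat \<Rightarrow> 'p \<Rightarrow> nat" where
  "Sm G r m \<alpha> = (\<Sum>i<m. tcost G (r i) (r (Suc i)) \<alpha>)"

lemma hist_outcome: "hist G P n = map (outcome G P) [0..<Suc n]"
proof (induction n)
  case 0 then show ?case by (simp add: outcome_def)
next
  case (Suc n)
  have "hist G P (Suc n) = hist G P n @ [outcome G P (Suc n)]"
    by (simp add: outcome_def)
  then show ?case using Suc by simp
qed

lemma outcome_0: "outcome G P 0 = init G" by (simp add: outcome_def)

lemma outcome_Suc: "outcome G P (Suc n) = trans G (outcome G P n) (\<lambda>\<beta>. P \<beta> (map (outcome G P) [0..<Suc n]))"
proof -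
  have "outcome G P (Suc n) = trans G (outcome G P n) (\<lambda>\<beta>. P \<beta> (hist G P n))"
    by (simp add: outcome_def)
  then show ?thesis by (simp only: hist_outcome)
qed

lemma outcome_eqI:
  assumes "r 0 = init G" "\<And>n. r (Suc n) = trans G (r n) (\<lambda>\<beta>. Q \<beta> (map r [0..<Suc n]))"
  shows "outcome G Q = r"
proof -
  have "\<forall>k\<le>n. outcome G Q k = r k" for n
  proof (induction n)
    case 0 then show ?case by (simp add: outcome_0 assms)
  next
    case (Suc n)
    have m: "map (outcome G Q) [0..<Suc n] = map r [0..<Suc n]"
      using Suc by (auto simp: less_Suc_eq_le)
    have o: "outcome G Q n = r n" using Suc by simp
    have "outcome G Q (Suc n) = r (Suc n)"
      by (simp only: outcome_Suc assms(2) m o)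
    then show ?case using Suc by (auto simp: le_Suc_eq)
  qed
  then show ?thesis by auto
qed

lemma pc_agree:
  assumes "\<forall>k\<le>n. r1 k = r2 k" "\<exists>k\<le>n. r1 k \<in> target G \<alpha>"
  shows "play_cost G r1 \<alpha> = play_cost G r2 \<alpha>"
proof -
  obtain k where k: "k \<le> n" "r1 k \<in> target G \<alpha>" using assms by blast
  define L where "L = (LEAST i. r1 i \<in> target G \<alpha>)"
  have L: "L \<le> k" unfolding L_def by (rule Least_le) (rule k(2))
  have L1: "r1 L \<in> target G \<alpha>" unfolding L_def by (rule LeastI) (rule k(2))
  have L2: "\<And>i. i < L \<Longrightarrow> r1 i \<notin> target G \<alpha>" unfolding L_def by (rule not_less_Least)
  have e: "(LEAST i. r2 i \<in> target G \<alpha>) = L"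
  proof (rule Least_equality)
    show "r2 L \<in> target G \<alpha>" using L1 L k assms(1) by auto
    show "\<And>y. r2 y \<in> target G \<alpha> \<Longrightarrow> L \<le> y"
      using L2 L k assms(1) by (metis le_trans nat_le_linear not_le)
  qed
  have s: "(\<Sum>i<L. tcost G (r1 i) (r1 (Suc i)) \<alpha>) = (\<Sum>i<L. tcost G (r2 i) (r2 (Suc i)) \<alpha>)"
    using L k assms(1) by (intro sum.cong) auto
  have "r2 L \<in> target G \<alpha>" using L1 L k assms(1) by auto
  then show ?thesis unfolding play_cost_def using k e s L_def by auto
qed

lemma Sm_agree: "\<forall>k\<le>m. r1 k = r2 k \<Longrightarrow> Sm G r1 m \<alpha> = Sm G r2 m \<alpha>"
  unfolding Sm_def by (intro sum.cong) auto

lemma sum_split_shift: "(\<Sum>i<m+k. f i) = (\<Sum>i<m. f i) + (\<Sum>i<k. f (m + i::nat))"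
  by (induction k) (auto simp: add.assoc)

lemma pc_split:
  assumes "\<forall>k\<le>m. r k \<notin> target G \<alpha>"
  shows "play_cost G r \<alpha> = enat (Sm G r m \<alpha>) + play_cost G (\<lambda>j. r (m + j)) \<alpha>"
proof (cases "\<exists>n. r n \<in> target G \<alpha>")
  case True
  then obtain n where n: "r n \<in> target G \<alpha>" by blast
  have "n > m" using assms n by (meson not_le)
  define L where "L = (LEAST i. r i \<in> target G \<alpha>)"
  have L1: "r L \<in> target G \<alpha>" unfolding L_def by (rule LeastI) (rule n)
  have L2: "\<And>i. i < L \<Longrightarrow> r i \<notin> target G \<alpha>" unfolding L_def by (rule not_less_Least)
  have Lm: "L > m" using L1 assms by (meson not_le)
  have e: "(LEAST i. r (m + i) \<in> target G \<alpha>) = L - m"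
  proof (rule Least_equality)
    show "r (m + (L - m)) \<in> target G \<alpha>" using L1 Lm by simp
    show "\<And>y. r (m + y) \<in> target G \<alpha> \<Longrightarrow> L - m \<le> y" using L2 by (metis le_diff_conv add.commute not_le)
  qed
  have "(\<Sum>i<L. tcost G (r i) (r (Suc i)) \<alpha>) = (\<Sum>i<m. tcost G (r i) (r (Suc i)) \<alpha>) + (\<Sum>i<L-m. tcost G (r (m+i)) (r (Suc (m+i))) \<alpha>)"
  proof -
    have e2: "m + (L - m) = L" using Lm by simp
    show ?thesis using sum_split_shift[where m=m and k="L - m" and f="\<lambda>i. tcost G (r i) (r (Suc i)) \<alpha>"] unfolding e2 .
  qed
  moreover have "\<exists>n. r (m + n) \<in> target G \<alpha>" using L1 Lm by (metis le_add_diff_inverse less_imp_le)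
  ultimately show ?thesis unfolding play_cost_def Sm_def L_def[symmetric] e using True
    by (simp add: add.commute)
next
  case False
  then show ?thesis unfolding play_cost_def by auto
qed

lemma enat_cancel: "(a::enat) + enat s \<le> b + enat s \<Longrightarrow> a \<le> b"
  by (cases a; cases b) auto




lemma game_lemma:
  fixes G :: "('p, 'v, 'a) cgame" and P :: "('p,'v,'a) profile"
  assumes NE: "is_NE G P"
    and r0: "\<rho>' 0 = init G"
    and edge: "\<And>n. \<rho>' n = outcome G P (\<pi> n) \<and> \<rho>' (Suc n) = outcome G P (Suc (\<pi> n))"
    and P3: "\<And>\<alpha> n. (\<forall>k\<le>n. \<rho>' k \<notin> target G \<alpha>) \<Longrightarrow>
              (\<forall>k\<le>\<pi> n. outcome G P k \<notin> target G \<alpha>) \<and>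
              play_cost G \<rho>' \<alpha> + enat (Sm G (outcome G P) (\<pi> n) \<alpha>) \<le> play_cost G (outcome G P) \<alpha> + enat (Sm G \<rho>' n \<alpha>)"
  shows "\<exists>P'. is_NE G P' \<and> outcome G P' = \<rho>'"
proof -
  define \<rho> where "\<rho> = outcome G P"
  define pre where "pre n = map \<rho>' [0..<Suc n]" for n
  define Pd where "Pd m h \<longleftrightarrow> Suc m \<le> length h \<and> take (Suc m) h = pre m" for m h
  define \<Phi> where "\<Phi> h = (if \<exists>m. Pd m h then map \<rho> [0..<Suc (\<pi> (GREATEST m. Pd m h))] @ drop (Suc (GREATEST m. Pd m h)) h else h)" for h
  define P' where "P' \<beta> h = P \<beta> (\<Phi> h)" for \<beta> h
  have validP: "valid_profile G P" using NE unfolding is_NE_def by auto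
  have validP': "valid_profile G P'" using validP unfolding valid_profile_def valid_strategy_def P'_def by auto
  have edge1: "\<rho>' n = \<rho> (\<pi> n)" for n using edge unfolding \<rho>_def by blast
  have edge2: "\<rho>' (Suc n) = \<rho> (Suc (\<pi> n))" for n using edge unfolding \<rho>_def by blast
  have lenpre: "length (pre n) = Suc n" for n unfolding pre_def by simp
  have Phi_pre: "\<Phi> (pre n @ X) = map \<rho> [0..<Suc (\<pi> n)] @ X" if X: "X = [] \<or> hd X \<noteq> \<rho>' (Suc n)" for n X
  proof -
    have pn: "Pd n (pre n @ X)" unfolding Pd_def using lenpre by simp
    have g: "(GREATEST m. Pd m (pre n @ X)) = n"
    proof (rule Greatest_equality)
      show "Pd n (pre n @ X)" by (rule pn)
      fix y assume y: "Pd y (pre n @ X)"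
      show "y \<le> n"
      proof (rule ccontr)
        assume "\<not> y \<le> n"
        then have yn: "Suc n < Suc y" by simp
        from y have ly: "Suc y \<le> Suc n + length X" and t: "take (Suc y) (pre n @ X) = pre y"
          unfolding Pd_def using lenpre by auto
        have Xne: "X \<noteq> []" using ly yn by auto
        have "take (Suc y) (pre n @ X) ! Suc n = (pre n @ X) ! Suc n" using yn by (metis nth_take)
        also have "\<dots> = hd X" using lenpre Xne by (simp add: nth_append hd_conv_nth)
        finally have "hd X = pre y ! Suc n" using t by simp
        also have "\<dots> = \<rho>' (Suc n)" unfolding pre_def using yn by (simp del: upt_Suc)
        finally show False using X Xne by simp
      qed
    qed
    show ?thesis unfolding \<Phi>_def using pn g lenpre by auto
  qed
  have Phi_pre0: "\<Phi> (pre n) = map \<rho> [0..<Suc (\<pi> n)]" for n using Phi_pre[of "[]" n] by simp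
  have outP': "outcome G P' = \<rho>'"
  proof (rule outcome_eqI)
    show "\<rho>' 0 = init G" by (rule r0)
    fix n
    have "\<rho>' (Suc n) = \<rho> (Suc (\<pi> n))" by (rule edge2)
    also have "\<dots> = trans G (\<rho> (\<pi> n)) (\<lambda>\<beta>. P \<beta> (map \<rho> [0..<Suc (\<pi> n)]))"
      unfolding \<rho>_def by (rule outcome_Suc)
    also have "\<dots> = trans G (\<rho>' n) (\<lambda>\<beta>. P' \<beta> (map \<rho>' [0..<Suc n]))"
      using edge1[of n] Phi_pre0[of n] unfolding P'_def pre_def by simp
    finally show "\<rho>' (Suc n) = trans G (\<rho>' n) (\<lambda>\<beta>. P' \<beta> (map \<rho>' [0..<Suc n]))" .
  qed
  have costP: "cost G P = play_cost G \<rho>" unfolding cost_def \<rho>_def by simp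
  have dev: "play_cost G \<rho>' \<alpha> \<le> cost G (P'(\<alpha> := \<sigma>)) \<alpha>" if \<sigma>: "valid_strategy G \<alpha> \<sigma>" for \<alpha> \<sigma>
  proof -
    define P1 where "P1 = P'(\<alpha> := \<sigma>)"
    define \<rho>1 where "\<rho>1 = outcome G P1"
    show ?thesis
    proof (cases "\<forall>m. \<rho>1 m = \<rho>' m")
      case True
      then have "\<rho>1 = \<rho>'" by auto
      then show ?thesis unfolding cost_def P1_def[symmetric] \<rho>1_def[symmetric] by simp
    next
      case False
      then obtain m0 where m0: "\<rho>1 m0 \<noteq> \<rho>' m0" by blast
      have "\<rho>1 0 = \<rho>' 0" unfolding \<rho>1_def using r0 outcome_0 by metis
      then obtain m1 where "m0 = Suc m1" using m0 by (cases m0) auto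
      then have exm: "\<exists>m. \<rho>1 (Suc m) \<noteq> \<rho>' (Suc m)" using m0 by blast
      define n where "n = (LEAST m. \<rho>1 (Suc m) \<noteq> \<rho>' (Suc m))"
      have nd: "\<rho>1 (Suc n) \<noteq> \<rho>' (Suc n)" unfolding n_def using exm by (rule LeastI_ex)
      have agree: "\<forall>k\<le>n. \<rho>1 k = \<rho>' k"
      proof (intro allI impI)
        fix k assume "k \<le> n"
        then show "\<rho>1 k = \<rho>' k"
        proof (cases k)
          case 0 then show ?thesis using \<open>\<rho>1 0 = \<rho>' 0\<close> by simp
        next
          case (Suc k')
          then have "k' < n" using \<open>k \<le> n\<close> by simp
          then show ?thesis using Suc not_less_Least[of k' "\<lambda>m. \<rho>1 (Suc m) \<noteq> \<rho>' (Suc m)"] unfolding n_def by blast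
        qed
      qed
      define pn where "pn = \<pi> n"
      define H0 where "H0 = map \<rho> [0..<Suc pn]"
      have lenH0: "length H0 = Suc pn" unfolding H0_def by simp
      define \<sigma>' where "\<sigma>' h = (if pn < length h \<and> take (Suc pn) h = H0 then \<sigma> (pre n @ drop (Suc pn) h) else P \<alpha> h)" for h
      have valid\<sigma>': "valid_strategy G \<alpha> \<sigma>'"
        using \<sigma> validP unfolding valid_strategy_def valid_profile_def \<sigma>'_def by auto
      define P2 where "P2 = P(\<alpha> := \<sigma>')"
      define r where "r k = (if k \<le> pn then \<rho> k else \<rho>1 (n + (k - pn)))" for k
      define X where "X j = map (\<lambda>i. \<rho>1 (Suc n + i)) [0..<j]" for j
      have pre1: "map \<rho>1 [0..<Suc (n + j)] = pre n @ X j" for j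
      proof -
        have "map \<rho>1 [0..<Suc n] = pre n" unfolding pre_def using agree by auto
        moreover have "[0..<Suc (n + j)] = [0..<Suc n] @ [Suc n..<Suc n + j]"
          by (metis add_Suc le_add1 upt_add_eq_append zero_le)
        moreover have "map \<rho>1 [Suc n..<Suc n + j] = X j" unfolding X_def
          by (rule map_upt_eqI) auto
        ultimately show ?thesis by simp
      qed
      have Xhd: "X j = [] \<or> hd (X j) \<noteq> \<rho>' (Suc n)" for j
        using nd unfolding X_def by (cases j) (auto simp: upt_conv_Cons simp del: upt_Suc)
      have rmap: "map r [0..<Suc (pn + j)] = H0 @ X j" for j
      proof -
        have "[0..<Suc (pn + j)] = [0..<Suc pn] @ [Suc pn..<Suc pn + j]"
          by (metis add_Suc le_add1 upt_add_eq_append zero_le)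
        moreover have "map r [0..<Suc pn] = H0" unfolding H0_def r_def by auto
        moreover have "map r [Suc pn..<Suc pn + j] = X j" unfolding X_def r_def
          by (rule map_upt_eqI) auto
        ultimately show ?thesis by simp
      qed
      have outP2: "outcome G P2 = r"
      proof (rule outcome_eqI)
        show "r 0 = init G" unfolding r_def \<rho>_def by (simp add: outcome_0)
        fix k
        show "r (Suc k) = trans G (r k) (\<lambda>\<beta>. P2 \<beta> (map r [0..<Suc k]))"
        proof (cases "Suc k \<le> pn")
          case True
          have mr: "map r [0..<Suc k] = map \<rho> [0..<Suc k]" unfolding r_def using True by auto
          have P2eq: "P2 \<beta> (map \<rho> [0..<Suc k]) = P \<beta> (map \<rho> [0..<Suc k])" for \<beta>
            unfolding P2_def \<sigma>'_def using True by auto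
          have rS: "r (Suc k) = \<rho> (Suc k)" and rk: "r k = \<rho> k" unfolding r_def using True by auto
          show ?thesis unfolding rS rk mr P2eq unfolding \<rho>_def by (rule outcome_Suc)
        next
          case False
          define j where "j = k - pn"
          have kj: "k = pn + j" using False unfolding j_def by simp
          have rk: "r k = \<rho>1 (n + j)"
          proof (cases j)
            case 0 then show ?thesis unfolding r_def kj pn_def using edge1 agree by auto
          next
            case (Suc j') then show ?thesis unfolding r_def kj by auto
          qed
          have rSk: "r (Suc k) = \<rho>1 (Suc (n + j))" unfolding r_def kj by auto
          have act: "P2 \<beta> (H0 @ X j) = P1 \<beta> (pre n @ X j)" for \<beta>
          proof (cases "\<beta> = \<alpha>")
            case True
            then show ?thesis unfolding P2_def P1_def \<sigma>'_def using lenH0 by auto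
          next
            case False
            then show ?thesis unfolding P2_def P1_def P'_def
              using Phi_pre[OF Xhd[of j]] unfolding H0_def pn_def by simp
          qed
          show ?thesis unfolding rk rSk unfolding kj rmap act pre1[symmetric] unfolding \<rho>1_def
            by (rule outcome_Suc)
        qed
      qed
      have "cost G P \<alpha> \<le> cost G P2 \<alpha>"
        using NE valid\<sigma>' unfolding is_NE_def P2_def by blast
      then have c2: "cost G P \<alpha> \<le> play_cost G r \<alpha>" unfolding cost_def outP2 .
      show ?thesis
      proof (cases "\<exists>k\<le>n. \<rho>' k \<in> target G \<alpha>")
        case True
        then have "play_cost G \<rho>1 \<alpha> = play_cost G \<rho>' \<alpha>"
          using agree pc_agree[of n \<rho>' \<rho>1 G \<alpha>] by auto
        then show ?thesis unfolding cost_def P1_def[symmetric] \<rho>1_def[symmetric] by simp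
      next
        case False
        then have nv: "\<forall>k\<le>n. \<rho>' k \<notin> target G \<alpha>" by auto
        note p3 = P3[OF nv]
        have nv1: "\<forall>k\<le>n. \<rho>1 k \<notin> target G \<alpha>" using nv agree by auto
        have nv2: "\<forall>k\<le>pn. r k \<notin> target G \<alpha>" using p3 unfolding r_def \<rho>_def pn_def by auto
        define Q where "Q = play_cost G (\<lambda>j. \<rho>1 (n + j)) \<alpha>"
        have shift: "(\<lambda>j. r (pn + j)) = (\<lambda>j. \<rho>1 (n + j))"
        proof
          fix j show "r (pn + j) = \<rho>1 (n + j)"
            by (cases j) (auto simp: r_def pn_def edge1 agree)
        qed
        have e1: "play_cost G \<rho>1 \<alpha> = enat (Sm G \<rho>' n \<alpha>) + Q"
          using pc_split[OF nv1] Sm_agree[OF agree, of G \<alpha>] unfolding Q_def by metis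
        have e2: "play_cost G r \<alpha> = enat (Sm G \<rho> pn \<alpha>) + Q"
        proof -
          have "\<forall>k\<le>pn. r k = \<rho> k" unfolding r_def by auto
          then have "Sm G r pn \<alpha> = Sm G \<rho> pn \<alpha>" by (rule Sm_agree)
          then show ?thesis using pc_split[OF nv2] shift unfolding Q_def by metis
        qed
        have "play_cost G \<rho>' \<alpha> + enat (Sm G \<rho> pn \<alpha>) \<le> play_cost G \<rho> \<alpha> + enat (Sm G \<rho>' n \<alpha>)"
          using p3 unfolding \<rho>_def pn_def by simp
        also have "\<dots> \<le> play_cost G r \<alpha> + enat (Sm G \<rho>' n \<alpha>)"
          using c2 costP by (simp add: add_right_mono)
        also have "\<dots> = play_cost G \<rho>1 \<alpha> + enat (Sm G \<rho> pn \<alpha>)"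
          using e1 e2 by (simp add: ac_simps)
        finally have "play_cost G \<rho>' \<alpha> \<le> play_cost G \<rho>1 \<alpha>" by (rule enat_cancel)
        then show ?thesis unfolding cost_def P1_def[symmetric] \<rho>1_def[symmetric] by simp
      qed
    qed
  qed
  have "is_NE G P'"
    unfolding is_NE_def using validP' dev unfolding cost_def outP' by auto
  then show ?thesis using outP' by blast
qed




locale LB =
  fixes G :: "('p::finite, 'v::finite, 'a) cgame" and \<rho> :: "nat \<Rightarrow> 'v"
begin

definition W where "W = {\<alpha>. \<exists>n. \<rho> n \<in> target G \<alpha>}"
definition tt where "tt \<alpha> = (LEAST n. \<rho> n \<in> target G \<alpha>)"
definition T where "T = Max (insert 0 (tt ` W))"
definition tb where "tb M = Min (insert T (tt ` (W - M)))"
definition vis where "vis v = {\<alpha>. v \<in> target G \<alpha>}"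
definition jmp where "jmp M x = (if \<exists>q\<le>tb M. \<rho> q = \<rho> x then GREATEST q. q \<le> tb M \<and> \<rho> q = \<rho> x else LEAST q. \<rho> q = \<rho> x)"

fun pa :: "nat \<Rightarrow> nat \<times> 'p set" where
  "pa 0 = (jmp (vis (\<rho> 0)) 0, vis (\<rho> 0))"
| "pa (Suc n) = (let A' = snd (pa n) \<union> vis (\<rho> (Suc (fst (pa n)))) in (jmp A' (Suc (fst (pa n))), A'))"

definition pp where "pp n = fst (pa n)"
definition Av where "Av n = snd (pa n)"
definition r' where "r' n = \<rho> (pp n)"
definition xx where "xx n = (case n of 0 \<Rightarrow> 0 | Suc m \<Rightarrow> Suc (pp m))"

lemma jmp_rho: "\<rho> (jmp M x) = \<rho> x"
proof (cases "\<exists>q\<le>tb M. \<rho> q = \<rho> x")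
  case True
  then obtain q where q: "q \<le> tb M" "\<rho> q = \<rho> x" by blast
  have "(GREATEST q. q \<le> tb M \<and> \<rho> q = \<rho> x) \<le> tb M \<and> \<rho> (GREATEST q. q \<le> tb M \<and> \<rho> q = \<rho> x) = \<rho> x"
    by (rule GreatestI_nat[of _ q "tb M"]) (use q in auto)
  then show ?thesis using True unfolding jmp_def by simp
next
  case False
  then have "jmp M x = (LEAST q. \<rho> q = \<rho> x)" unfolding jmp_def by meson
  then show ?thesis using LeastI[of "\<lambda>q. \<rho> q = \<rho> x" x] by simp
qed

lemma jmp_greatest:
  assumes "\<exists>q\<le>tb M. \<rho> q = \<rho> x"
  shows "jmp M x \<le> tb M" "\<And>q. q \<le> tb M \<Longrightarrow> \<rho> q = \<rho> x \<Longrightarrow> q \<le> jmp M x"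
proof -
  obtain q where q: "q \<le> tb M" "\<rho> q = \<rho> x" using assms by blast
  have "(GREATEST q. q \<le> tb M \<and> \<rho> q = \<rho> x) \<le> tb M \<and> \<rho> (GREATEST q. q \<le> tb M \<and> \<rho> q = \<rho> x) = \<rho> x"
    by (rule GreatestI_nat[of _ q "tb M"]) (use q in auto)
  then show "jmp M x \<le> tb M" using assms unfolding jmp_def by simp
  fix q' assume "q' \<le> tb M" "\<rho> q' = \<rho> x"
  then have "q' \<le> (GREATEST q. q \<le> tb M \<and> \<rho> q = \<rho> x)"
    by (intro Greatest_le_nat[of _ q' "tb M"]) auto
  then show "q' \<le> jmp M x" using assms unfolding jmp_def by simp
qed

lemma pp_0: "pp 0 = jmp (Av 0) (xx 0)" and Av_0: "Av 0 = vis (\<rho> 0)"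
  unfolding pp_def Av_def xx_def by simp_all

lemma pp_Suc: "pp (Suc n) = jmp (Av (Suc n)) (xx (Suc n))"
  and Av_Suc: "Av (Suc n) = Av n \<union> vis (\<rho> (Suc (pp n)))"
  unfolding pp_def Av_def xx_def by (simp_all add: Let_def)

lemma pp_xx: "pp n = jmp (Av n) (xx n)"
  by (cases n) (simp_all only: pp_0 pp_Suc)

lemma r'_xx: "r' n = \<rho> (xx n)"
  unfolding r'_def pp_xx jmp_rho ..

lemma r'_Suc: "r' (Suc n) = \<rho> (Suc (pp n))"
  using r'_xx[of "Suc n"] unfolding xx_def by simp

lemma r'_0: "r' 0 = \<rho> 0"
  using r'_xx[of 0] unfolding xx_def by simp

lemma Av_char: "Av n = {\<alpha>. \<exists>k\<le>n. r' k \<in> target G \<alpha>}"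
proof (induction n)
  case 0 then show ?case by (auto simp: Av_0 vis_def r'_0)
next
  case (Suc n)
  then show ?case by (auto simp: Av_Suc vis_def r'_Suc[symmetric] le_Suc_eq)
qed

lemma Av_mono: "n \<le> m \<Longrightarrow> Av n \<subseteq> Av m"
  unfolding Av_char using le_trans by blast

lemma Av_W: "Av n \<subseteq> W"
  unfolding Av_char W_def r'_def by auto

lemma finW: "finite W" by simp

lemma tt_in: "\<alpha> \<in> W \<Longrightarrow> \<rho> (tt \<alpha>) \<in> target G \<alpha>"
  unfolding W_def tt_def by (auto intro: LeastI)

lemma tt_min: "i < tt \<alpha> \<Longrightarrow> \<rho> i \<notin> target G \<alpha>"
  unfolding tt_def by (rule not_less_Least)

lemma tt_le: "\<rho> i \<in> target G \<alpha> \<Longrightarrow> tt \<alpha> \<le> i"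
  unfolding tt_def by (rule Least_le)

lemma tt_le_T: "\<alpha> \<in> W \<Longrightarrow> tt \<alpha> \<le> T"
  unfolding T_def by (rule Max_ge) auto

lemma K:
  assumes h1: "\<forall>\<alpha>\<in>W-M. x \<le> tt \<alpha>" and h2: "vis (\<rho> x) \<subseteq> M" and h3: "W - M \<noteq> {}"
  shows "\<exists>q\<le>tb M. \<rho> q = \<rho> x" "x \<le> jmp M x" "\<forall>\<alpha>\<in>W-M. jmp M x < tt \<alpha>"
proof -
  obtain \<beta> where \<beta>: "\<beta> \<in> W - M" using h3 by blast
  have xT: "x \<le> T" using h1 \<beta> tt_le_T by (meson DiffD1 le_trans)
  have xtb: "x \<le> tb M" unfolding tb_def using xT h1 by (subst Min_ge_iff) auto
  then show ex: "\<exists>q\<le>tb M. \<rho> q = \<rho> x" by blast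
  show "x \<le> jmp M x" using jmp_greatest(2)[OF ex xtb] by simp
  show "\<forall>\<alpha>\<in>W-M. jmp M x < tt \<alpha>"
  proof
    fix \<alpha> assume a: "\<alpha> \<in> W - M"
    have "tb M \<le> tt \<alpha>" unfolding tb_def using a by (intro Min_le) auto
    then have le: "jmp M x \<le> tt \<alpha>" using jmp_greatest(1)[OF ex] by simp
    have "jmp M x \<noteq> tt \<alpha>"
    proof
      assume "jmp M x = tt \<alpha>"
      then have "\<rho> x \<in> target G \<alpha>" using jmp_rho[of M x] tt_in[of \<alpha>] a by simp
      then show False using h2 a unfolding vis_def by auto
    qed
    then show "jmp M x < tt \<alpha>" using le by simp
  qed
qed

lemma hyp_inv: "(\<forall>\<alpha>\<in>W - Av n. xx n \<le> tt \<alpha>) \<and> vis (\<rho> (xx n)) \<subseteq> Av n \<and> (\<forall>\<alpha>\<in>W - Av n. pp n < tt \<alpha>)"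
proof (induction n)
  case 0
  have h1: "\<forall>\<alpha>\<in>W - Av 0. xx 0 \<le> tt \<alpha>" unfolding xx_def by simp
  have h2: "vis (\<rho> (xx 0)) \<subseteq> Av 0" unfolding xx_def Av_0 by simp
  have "\<forall>\<alpha>\<in>W - Av 0. pp 0 < tt \<alpha>"
  proof (cases "W - Av 0 = {}")
    case False then show ?thesis using K(3)[OF h1 h2 False] pp_xx[of 0] by simp
  qed blast
  then show ?case using h1 h2 by simp
next
  case (Suc n)
  have h1: "\<forall>\<alpha>\<in>W - Av (Suc n). xx (Suc n) \<le> tt \<alpha>"
  proof
    fix \<alpha> assume "\<alpha> \<in> W - Av (Suc n)"
    then have "\<alpha> \<in> W - Av n" using Av_Suc by auto
    then have "pp n < tt \<alpha>" using Suc.IH by blast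
    then show "xx (Suc n) \<le> tt \<alpha>" unfolding xx_def by simp
  qed
  have h2: "vis (\<rho> (xx (Suc n))) \<subseteq> Av (Suc n)" unfolding xx_def Av_Suc by simp
  have "\<forall>\<alpha>\<in>W - Av (Suc n). pp (Suc n) < tt \<alpha>"
  proof (cases "W - Av (Suc n) = {}")
    case False then show ?thesis using K(3)[OF h1 h2 False] pp_xx[of "Suc n"] by simp
  qed blast
  then show ?case using h1 h2 by simp
qed

lemma inv: "\<alpha> \<in> W - Av n \<Longrightarrow> pp n < tt \<alpha>"
  using hyp_inv by blast

lemma greatest:
  assumes "W - Av n \<noteq> {}"
  shows "pp n \<le> tb (Av n)" "\<And>q. q \<le> tb (Av n) \<Longrightarrow> \<rho> q = \<rho> (pp n) \<Longrightarrow> q \<le> pp n"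
proof -
  have ex: "\<exists>q\<le>tb (Av n). \<rho> q = \<rho> (xx n)" using K(1)[OF _ _ assms] hyp_inv by blast
  show "pp n \<le> tb (Av n)" unfolding pp_xx using jmp_greatest(1)[OF ex] .
  fix q assume "q \<le> tb (Av n)" "\<rho> q = \<rho> (pp n)"
  then show "q \<le> pp n" unfolding pp_xx using jmp_greatest(2)[OF ex] jmp_rho by metis
qed

lemma inc: "W - Av (Suc n) \<noteq> {} \<Longrightarrow> pp n < pp (Suc n)"
  using K(2)[of "Av (Suc n)" "xx (Suc n)"] hyp_inv[of "Suc n"] pp_xx[of "Suc n"]
  unfolding xx_def by auto

lemma mono2: "m < m' \<Longrightarrow> W - Av m' \<noteq> {} \<Longrightarrow> pp m < pp m'"
proof (induction m')
  case 0 then show ?case by simp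
next
  case (Suc m')
  have ne: "W - Av m' \<noteq> {}" using Suc.prems(2) Av_mono[of m' "Suc m'"] by auto
  have "pp m' < pp (Suc m')" using inc Suc.prems(2) by blast
  then show ?case using Suc ne by (cases "m = m'") auto
qed

lemma mono3: "m \<le> m' \<Longrightarrow> W - Av m' \<noteq> {} \<Longrightarrow> pp m \<le> pp m'"
  using mono2 by (cases "m = m'") (auto simp: less_imp_le)

lemma exN: "\<exists>n. W \<subseteq> Av n"
proof (rule ccontr)
  assume "\<not> ?thesis"
  then have ne: "W - Av n \<noteq> {}" for n by blast
  have "n \<le> pp n" for n
  proof (induction n)
    case (Suc n)
    have "pp n < pp (Suc n)" by (rule inc[OF ne])
    then show ?case using Suc.IH by linarith
  qed simp
  moreover obtain \<alpha> where "\<alpha> \<in> W - Av T" using ne by blast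
  then have "pp T < T" using inv tt_le_T by (meson DiffD1 order_less_le_trans)
  ultimately show False using not_le by blast
qed

definition N where "N = (LEAST n. W \<subseteq> Av n)"

lemma WN: "W \<subseteq> Av N" unfolding N_def using exN by (rule LeastI_ex)

lemma belowN: "n < N \<Longrightarrow> W - Av n \<noteq> {}"
  unfolding N_def using not_less_Least by blast

lemma aboveN: "N \<le> n \<Longrightarrow> W - Av n = {}"
  using WN Av_mono by blast

lemma P3:
  assumes nv: "\<forall>k\<le>n. r' k \<notin> target G \<alpha>"
  shows "(\<forall>k\<le>pp n. \<rho> k \<notin> target G \<alpha>) \<and>
         play_cost G r' \<alpha> + enat (Sm G \<rho> (pp n) \<alpha>) \<le> play_cost G \<rho> \<alpha> + enat (Sm G r' n \<alpha>)"
proof (cases "\<alpha> \<in> W")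
  case False
  then have "\<forall>k. \<rho> k \<notin> target G \<alpha>" unfolding W_def by auto
  then show ?thesis unfolding play_cost_def by simp
next
  case True
  then have "\<alpha> \<in> Av N" using WN by blast
  then have ex: "\<exists>k. r' k \<in> target G \<alpha>" unfolding Av_char by blast
  define L where "L = (LEAST k. r' k \<in> target G \<alpha>)"
  have L1: "r' L \<in> target G \<alpha>" unfolding L_def using ex by (rule LeastI_ex)
  have L2: "k < L \<Longrightarrow> r' k \<notin> target G \<alpha>" for k unfolding L_def by (rule not_less_Least)
  have nL: "n < L" using nv L1 not_le by blast
  have notA: "m < L \<Longrightarrow> \<alpha> \<in> W - Av m" for m using True L2 unfolding Av_char by auto
  have ppt: "m < L \<Longrightarrow> pp m < tt \<alpha>" for m using inv notA by blast
  have first: "\<forall>k\<le>pp n. \<rho> k \<notin> target G \<alpha>" using ppt[OF nL] tt_min by auto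
  define f where "f j = tcost G (\<rho> j) (\<rho> (Suc j)) \<alpha>" for j
  define d where "d = L - n"
  have Ld: "L = n + d" unfolding d_def using nL by simp
  have pc1: "play_cost G r' \<alpha> = enat (Sm G r' L \<alpha>)" unfolding play_cost_def Sm_def L_def using ex by simp
  have pc2: "play_cost G \<rho> \<alpha> = enat (Sm G \<rho> (tt \<alpha>) \<alpha>)"
    using True unfolding play_cost_def Sm_def tt_def W_def by simp
  have s1: "Sm G r' L \<alpha> = Sm G r' n \<alpha> + (\<Sum>i<d. f (pp (n + i)))"
    unfolding Sm_def Ld sum_split_shift f_def r'_Suc unfolding r'_def by simp
  define e where "e = tt \<alpha> - pp n"
  have te: "tt \<alpha> = pp n + e" unfolding e_def using ppt[OF nL] by simp
  have s2: "Sm G \<rho> (tt \<alpha>) \<alpha> = Sm G \<rho> (pp n) \<alpha> + (\<Sum>i<e. f (pp n + i))"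
    unfolding Sm_def te sum_split_shift f_def by simp
  have inj: "inj_on (\<lambda>i. pp (n + i)) {..<d}"
  proof (rule inj_onI)
    fix i j assume i: "i \<in> {..<d}" and j: "j \<in> {..<d}" and e: "pp (n + i) = pp (n + j)"
    show "i = j"
    proof (rule ccontr)
      assume "i \<noteq> j"
      then consider "i < j" | "j < i" by linarith
      then show False
      proof cases
        case 1 then show False using mono2[of "n+i" "n+j"] notA[of "n+j"] j e Ld by auto
      next
        case 2 then show False using mono2[of "n+j" "n+i"] notA[of "n+i"] i e Ld by auto
      qed
    qed
  qed
  have inj2: "inj_on (\<lambda>i. pp n + i) {..<e}" by (rule inj_onI) simp
  have sub: "(\<lambda>i. pp (n + i)) ` {..<d} \<subseteq> (\<lambda>i. pp n + i) ` {..<e}"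
  proof
    fix y assume "y \<in> (\<lambda>i. pp (n + i)) ` {..<d}"
    then obtain i where i: "i < d" "y = pp (n + i)" by auto
    have "pp n \<le> pp (n + i)" using mono3[of n "n + i"] notA[of "n + i"] i Ld by auto
    moreover have "pp (n + i) < tt \<alpha>" using ppt[of "n + i"] i Ld by simp
    ultimately have "y = pp n + (y - pp n)" "y - pp n < e" using i te by auto
    then show "y \<in> (\<lambda>i. pp n + i) ` {..<e}" by blast
  qed
  have "(\<Sum>i<d. f (pp (n + i))) = sum f ((\<lambda>i. pp (n + i)) ` {..<d})"
    using sum.reindex[OF inj, of f] by (simp add: comp_def)
  also have "\<dots> \<le> sum f ((\<lambda>i. pp n + i) ` {..<e})"
    by (rule sum_mono2[OF _ sub]) auto
  also have "\<dots> = (\<Sum>i<e. f (pp n + i))"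
    using sum.reindex[OF inj2, of f] by (simp add: comp_def)
  finally have "(\<Sum>i<d. f (pp (n + i))) \<le> (\<Sum>i<e. f (pp n + i))" .
  then have "Sm G r' L \<alpha> + Sm G \<rho> (pp n) \<alpha> \<le> Sm G \<rho> (tt \<alpha>) \<alpha> + Sm G r' n \<alpha>"
    using s1 s2 by simp
  then have "play_cost G r' \<alpha> + enat (Sm G \<rho> (pp n) \<alpha>) \<le> play_cost G \<rho> \<alpha> + enat (Sm G r' n \<alpha>)"
    unfolding pc1 pc2 by (simp only: plus_enat_simps(1) enat_ord_simps(1))
  then show ?thesis using first by blast
qed

end



context LB
begin

definition N0 where "N0 = (if N = 0 then 0 else LEAST n. Av n = Av (N - 1))"
definition g where "g v = (if \<exists>q\<le>T. \<rho> q = v then GREATEST q. q \<le> T \<and> \<rho> q = v else LEAST q. \<rho> q = v)"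
definition nx where "nx v = \<rho> (Suc (g v))"

lemma N0_le: "N0 \<le> N" and N0_le1: "N > 0 \<Longrightarrow> N0 \<le> N - 1"
proof -
  show "N > 0 \<Longrightarrow> N0 \<le> N - 1" unfolding N0_def by (simp add: Least_le)
  then show "N0 \<le> N" unfolding N0_def by (cases "N = 0") auto
qed

lemma AvN0: "N > 0 \<Longrightarrow> Av N0 = Av (N - 1)"
proof -
  assume N: "N > 0"
  have "Av (LEAST n. Av n = Av (N - 1)) = Av (N - 1)" by (rule LeastI[of _ "N - 1"]) (rule refl)
  then show ?thesis using N unfolding N0_def by simp
qed

lemma N0_min: "N > 0 \<Longrightarrow> n < N0 \<Longrightarrow> Av n \<noteq> Av (N - 1)"
proof -
  assume "N > 0" "n < N0"
  then have "n < (LEAST n. Av n = Av (N - 1))" unfolding N0_def by simp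
  then show ?thesis by (rule not_less_Least)
qed

lemma Av_last: "N > 0 \<Longrightarrow> N0 \<le> m \<Longrightarrow> m < N \<Longrightarrow> Av m = Av (N - 1)"
  using AvN0 Av_mono[of N0 m] Av_mono[of m "N - 1"] by auto

lemma xT: assumes N: "N > 0" shows "Suc (pp (N - 1)) = T" "tb (Av (N - 1)) = T"
proof -
  define M where "M = Av (N - 1)"
  define x where "x = Suc (pp (N - 1))"
  have ne: "W - M \<noteq> {}" unfolding M_def using belowN N by simp
  have cover: "W \<subseteq> M \<union> vis (\<rho> x)"
    using WN Av_Suc[of "N - 1"] N unfolding M_def x_def by simp
  have h1: "tt \<alpha> = x" if a: "\<alpha> \<in> W - M" for \<alpha>
  proof -
    have "\<rho> x \<in> target G \<alpha>" using cover a unfolding vis_def by auto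
    then have "tt \<alpha> \<le> x" by (rule tt_le)
    moreover have "pp (N - 1) < tt \<alpha>" using inv a unfolding M_def by blast
    ultimately show ?thesis unfolding x_def by simp
  qed
  have h2: "tt \<beta> < x" if b: "\<beta> \<in> M" for \<beta>
  proof -
    obtain k where k: "k \<le> N - 1" "r' k \<in> target G \<beta>" using b unfolding M_def Av_char by blast
    have "tt \<beta> \<le> pp k" using tt_le k(2) unfolding r'_def by blast
    moreover have "pp k \<le> pp (N - 1)" using mono3[OF k(1)] ne unfolding M_def by blast
    ultimately show ?thesis unfolding x_def by simp
  qed
  obtain \<alpha> where a: "\<alpha> \<in> W - M" using ne by blast
  have Tx: "T = x" unfolding T_def
  proof (rule Max_eqI)
    show "finite (insert 0 (tt ` W))" by simp
    fix y assume "y \<in> insert 0 (tt ` W)"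
    then show "y \<le> x" using h1 h2 by (cases "y = 0") (auto, metis DiffI h1 h2 less_imp_le order_refl)
  next
    show "x \<in> insert 0 (tt ` W)" using h1[OF a] a by force
  qed
  then show "Suc (pp (N - 1)) = T" unfolding x_def by simp
  show "tb (Av (N - 1)) = T" unfolding M_def[symmetric] tb_def
  proof (rule Min_eqI)
    show "finite (insert T (tt ` (W - M)))" by simp
    fix y assume "y \<in> insert T (tt ` (W - M))"
    then show "T \<le> y" using h1 Tx by auto
  next
    show "T \<in> insert T (tt ` (W - M))" by simp
  qed
qed

lemma tbT: "N0 \<le> m \<Longrightarrow> tb (Av m) = T"
proof (cases "N \<le> m")
  case True
  then have "W - Av m = {}" by (rule aboveN)
  then have e: "tt ` (W - Av m) = {}" by blast
  show ?thesis unfolding tb_def e by simp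
next
  case False
  assume m: "N0 \<le> m"
  have N: "N > 0" using False by simp
  then show ?thesis using Av_last[OF N m] False xT(2)[OF N] by simp
qed

lemma pp_g: assumes "N0 \<le> m" shows "pp m = g (r' m)"
  unfolding pp_xx r'_xx jmp_def g_def tbT[OF assms] by (rule refl)

lemma det: "N0 \<le> m \<Longrightarrow> r' (Suc m) = nx (r' m)"
  unfolding r'_Suc nx_def using pp_g by simp

lemma block: "n < n' \<Longrightarrow> n' < N \<Longrightarrow> Av n = Av n' \<Longrightarrow> r' n \<noteq> r' n'"
proof
  assume a: "n < n'" "n' < N" "Av n = Av n'" "r' n = r' n'"
  have ne': "W - Av n' \<noteq> {}" using belowN a by simp
  have ne: "W - Av n \<noteq> {}" using belowN a by simp
  have lt: "pp n < pp n'" using mono2 a ne' by blast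
  have "pp n' \<le> tb (Av n)" using greatest(1)[OF ne'] a by simp
  moreover have "\<rho> (pp n') = \<rho> (pp n)" using a unfolding r'_def by simp
  ultimately have "pp n' \<le> pp n" by (rule greatest(2)[OF ne])
  then show False using lt by simp
qed

lemma landing: "N > 0 \<Longrightarrow> N0 \<le> n \<Longrightarrow> n < N \<Longrightarrow> r' n \<noteq> r' N"
proof
  assume a: "N > 0" "N0 \<le> n" "n < N" "r' n = r' N"
  have "r' N = \<rho> (Suc (pp (N - 1)))" using r'_Suc[of "N - 1"] a(1) by simp
  then have rN: "r' N = \<rho> T" using xT(1)[OF a(1)] by simp
  have ne: "W - Av n \<noteq> {}" using belowN a by simp
  have "T \<le> tb (Av n)" using tbT a by simp
  moreover have "\<rho> T = \<rho> (pp n)" using a rN unfolding r'_def by simp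
  ultimately have "T \<le> pp n" by (rule greatest(2)[OF ne])
  moreover obtain \<alpha> where "\<alpha> \<in> W - Av n" using ne by blast
  then have "pp n < T" using inv tt_le_T by (meson DiffD1 order_less_le_trans)
  ultimately show False by simp
qed

definition s where "s j = r' (N0 + j)"

lemma s_Suc: "s (Suc j) = nx (s j)"
  unfolding s_def using det[of "N0 + j"] by simp

lemma shift: "s a = s b \<Longrightarrow> s (a + t) = s (b + t)"
  by (induction t) (auto simp: s_Suc)

lemma s_noninj: "\<exists>a b. a < b \<and> s a = s b"
proof -
  have "\<not> inj s"
  proof
    assume "inj s"
    moreover have "finite (range s)" by simp
    ultimately have "finite (UNIV :: nat set)" using finite_imageD by blast
    then show False by simp
  qed
  then obtain a b where "a \<noteq> b" "s a = s b" unfolding inj_def by blast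
  then show ?thesis by (metis linorder_neqE_nat)
qed

definition i0 where "i0 = (LEAST i. \<exists>j>i. s j = s i)"

lemma i0_ex: "\<exists>j>i0. s j = s i0"
proof -
  have "\<exists>i. \<exists>j>i. s j = s i" using s_noninj by metis
  then show ?thesis unfolding i0_def by (rule LeastI_ex)
qed

lemma i0_min: "a < i0 \<Longrightarrow> a < b \<Longrightarrow> s b \<noteq> s a"
  unfolding i0_def using not_less_Least by blast

definition j0 where "j0 = (LEAST j. i0 < j \<and> s j = s i0)"

lemma j0: "i0 < j0" "s j0 = s i0"
  using LeastI_ex[OF i0_ex] unfolding j0_def by auto

lemma j0_min: "i0 < j \<Longrightarrow> j < j0 \<Longrightarrow> s j \<noteq> s i0"
  unfolding j0_def using not_less_Least by blast

definition per where "per = j0 - i0"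

lemma per_pos: "per > 0" unfolding per_def using j0 by simp

lemma per1: "s (i0 + per) = s i0" unfolding per_def using j0 by simp

lemma per_mult: "i0 \<le> m \<Longrightarrow> s (m + q * per) = s m"
proof (induction q)
  case 0 then show ?case by simp
next
  case (Suc q)
  define u where "u = m + q * per - i0"
  have "s (i0 + per + u) = s (i0 + u)" by (rule shift[OF per1])
  have e1: "m + Suc q * per = i0 + per + u" and e2: "m + q * per = i0 + u" unfolding u_def using Suc.prems by auto
  have "s (m + Suc q * per) = s (i0 + per + u)" by (simp only: e1)
  also have "\<dots> = s (i0 + u)" by (rule shift[OF per1])
  also have "\<dots> = s (m + q * per)" by (simp only: e2)
  also have "\<dots> = s m" by (rule Suc.IH[OF Suc.prems])
  finally show ?case .
qed

lemma cyc_dist: "i0 \<le> a \<Longrightarrow> a < b \<Longrightarrow> b < a + per \<Longrightarrow> s a \<noteq> s b"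
proof
  assume a: "i0 \<le> a" "a < b" "b < a + per" "s a = s b"
  define d where "d = b - a"
  define u where "u = a - i0"
  define t where "t = per - u mod per"
  have ut: "a + t = i0 + (u div per + 1) * per"
  proof -
    define qq where "qq = u div per"
    define r where "r = u mod per"
    have u1: "u = qq * per + r" unfolding qq_def r_def by (rule div_mult_mod_eq[symmetric])
    have r1: "r < per" unfolding r_def using per_pos by simp
    have a1: "a = i0 + u" unfolding u_def using a(1) by simp
    have t1: "t = per - r" unfolding t_def r_def by simp
    have "(qq + 1) * per = qq * per + per" by simp
    then show ?thesis unfolding qq_def[symmetric] using u1 r1 a1 t1 by linarith
  qed
  have bt: "b + t = (i0 + d) + (u div per + 1) * per" using ut a unfolding d_def by simp
  have "s (a + t) = s (b + t)" using shift a(4) by blast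
  then have y: "s (i0 + (u div per + 1) * per) = s (i0 + d + (u div per + 1) * per)" unfolding ut bt .
  have x1: "s (i0 + (u div per + 1) * per) = s i0" by (rule per_mult) simp
  have x2: "s (i0 + d + (u div per + 1) * per) = s (i0 + d)" by (rule per_mult) simp
  have "s i0 = s (i0 + d)" using x1 x2 y by metis
  moreover have "i0 < i0 + d" "i0 + d < j0" using a unfolding d_def per_def by auto
  ultimately show False using j0_min by metis
qed

definition E' where "E' = max (N - N0) i0"
definition E where "E = N0 + E'"

lemma dist_pre: "a < b \<Longrightarrow> b \<le> E' \<Longrightarrow> s a \<noteq> s b"
proof (cases "b \<le> N - N0")
  case True
  assume ab: "a < b" "b \<le> E'"
  have N: "N > 0" using True ab by simp
  show ?thesis
  proof (cases "b < N - N0")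
    case True
    have "Av (N0 + a) = Av (N0 + b)" using Av_last[OF N, of "N0 + a"] Av_last[OF N, of "N0 + b"] True ab by simp
    then show ?thesis unfolding s_def using block[of "N0 + a" "N0 + b"] True ab by simp
  next
    case False
    then have "N0 + b = N" using \<open>b \<le> N - N0\<close> N0_le by simp
    then show ?thesis unfolding s_def using landing[OF N, of "N0 + a"] ab by simp
  qed
next
  case False
  assume ab: "a < b" "b \<le> E'"
  then have "b \<le> i0" using False unfolding E'_def by simp
  then show ?thesis using i0_min[of a b] ab by auto
qed

lemma cardE': "Suc E' \<le> card (UNIV :: 'v set)"
proof -
  have "inj_on s {..E'}"
  proof (rule inj_onI)
    fix a b assume "a \<in> {..E'}" "b \<in> {..E'}" "s a = s b"
    then show "a = b" using dist_pre[of a b] dist_pre[of b a] by (metis atMost_iff linorder_neqE_nat)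
  qed
  then have "card {..E'} \<le> card (UNIV :: 'v set)" by (rule card_inj_on_le) auto
  then show ?thesis by simp
qed

lemma cardN0: assumes N: "N > 0" shows "N0 + card (UNIV :: 'v set) \<le> card W * card (UNIV :: 'v set)"
proof -
  define Lab where "Lab = Av ` {..<N0}"
  have ne: "W - Av (N - 1) \<noteq> {}" using belowN N by simp
  have cW: "card (Av (N - 1)) < card W" using ne Av_W by (intro psubset_card_mono) auto
  have cl: "card M < card W - 1" if hM: "M \<in> Lab" for M
  proof -
    obtain n where n: "n < N0" "M = Av n" using hM unfolding Lab_def by blast
    have "Av n \<subseteq> Av (N - 1)" using Av_mono n N0_le1[OF N] by simp
    moreover have "Av n \<noteq> Av (N - 1)" using N0_min[OF N n(1)] .
    ultimately have "card (Av n) < card (Av (N - 1))" by (intro psubset_card_mono) auto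
    then show ?thesis using cW n by simp
  qed
  have injc: "inj_on card Lab"
  proof (rule inj_onI)
    fix M1 M2 assume m1: "M1 \<in> Lab" and m2: "M2 \<in> Lab" and c: "card M1 = card M2"
    obtain n1 n2 where "M1 = Av n1" "M2 = Av n2" using m1 m2 unfolding Lab_def by blast
    then have "M1 \<subseteq> M2 \<or> M2 \<subseteq> M1" using Av_mono by (metis nat_le_linear)
    then show "M1 = M2" using c by (metis card_subset_eq finite)
  qed
  have cLab: "card Lab \<le> card W - 1"
  proof -
    have "card Lab = card (card ` Lab)" using injc by (simp add: card_image)
    also have "\<dots> \<le> card {..<card W - 1}" using cl by (intro card_mono) auto
    finally show ?thesis by simp
  qed
  have cover: "{..<N0} = (\<Union>M\<in>Lab. {n. n < N0 \<and> Av n = M})" unfolding Lab_def by auto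
  have blk: "card {n. n < N0 \<and> Av n = M} \<le> card (UNIV :: 'v set)" for M
  proof -
    have "inj_on r' {n. n < N0 \<and> Av n = M}"
    proof (rule inj_onI)
      fix a b assume a: "a \<in> {n. n < N0 \<and> Av n = M}" and b: "b \<in> {n. n < N0 \<and> Av n = M}" and e: "r' a = r' b"
      have lt: "a < N" "b < N" using a b N0_le1[OF N] N by auto
      have am: "Av a = M" and bm: "Av b = M" using a b by auto
      show "a = b"
      proof (rule ccontr)
        assume "a \<noteq> b"
        then consider "a < b" | "b < a" by linarith
        then show False
        proof cases
          case 1 then show False using block[of a b] lt am bm e by simp
        next
          case 2 then show False using block[of b a] lt am bm e by simp
        qed
      qed
    qed
    then show ?thesis by (rule card_inj_on_le) auto
  qed
  have "N0 = card {..<N0}" by simp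
  also have "\<dots> \<le> (\<Sum>M\<in>Lab. card {n. n < N0 \<and> Av n = M})"
    unfolding cover by (rule card_UN_le) (simp add: Lab_def)
  also have "\<dots> \<le> card Lab * card (UNIV :: 'v set)"
    using sum_bounded_above[of Lab "\<lambda>M. card {n. n < N0 \<and> Av n = M}" "card (UNIV :: 'v set)"] blk by simp
  also have "\<dots> \<le> (card W - 1) * card (UNIV :: 'v set)" using cLab by simp
  finally have f: "N0 \<le> (card W - 1) * card (UNIV :: 'v set)" .
  obtain k where k: "card W = Suc k" using cW by (cases "card W") auto
  show ?thesis using f unfolding k by simp
qed

lemma Ebound: "E \<le> card (UNIV :: 'p set) * card (UNIV :: 'v set)"
proof (cases "N = 0")
  case True
  then have "E = E'" unfolding E_def N0_def by simp
  moreover have "card (UNIV :: 'p set) \<ge> 1" using card_gt_0_iff[of "UNIV :: 'p set"] by simp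
  then have "1 * card (UNIV :: 'v set) \<le> card (UNIV :: 'p set) * card (UNIV :: 'v set)" by (rule mult_le_mono1)
  ultimately show ?thesis using cardE' by linarith
next
  case False
  then have a: "N0 + card (UNIV :: 'v set) \<le> card W * card (UNIV :: 'v set)" using cardN0 by simp
  have "Suc E \<le> card W * card (UNIV :: 'v set)"
    using a cardE' unfolding E_def by linarith
  moreover have "card W \<le> card (UNIV :: 'p set)" by (rule card_mono) auto
  then have "card W * card (UNIV :: 'v set) \<le> card (UNIV :: 'p set) * card (UNIV :: 'v set)" by (rule mult_le_mono1)
  ultimately show ?thesis by linarith
qed

lemma win: "\<alpha> \<in> W \<Longrightarrow> \<exists>k\<le>E. r' k \<in> target G \<alpha>"
proof -
  assume "\<alpha> \<in> W"
  then obtain k where k: "k \<le> N" "r' k \<in> target G \<alpha>" using WN unfolding Av_char by blast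
  have "N \<le> E" unfolding E_def E'_def using N0_le by simp
  then show ?thesis using k by (meson le_trans)
qed

lemma lasso_r': "lasso r' (map r' [0..<Suc E]) (map s [E'..<E' + per])"
proof -
  have Ei: "i0 \<le> E'" unfolding E'_def by simp
  have dist: "distinct (map s [E'..<E' + per])"
  proof -
    have "inj_on s {E'..<E' + per}"
    proof (rule inj_onI)
      fix a b assume a: "a \<in> {E'..<E' + per}" and b: "b \<in> {E'..<E' + per}" and e: "s a = s b"
      have a1: "E' \<le> a" "a < E' + per" and b1: "E' \<le> b" "b < E' + per" using a b by auto
      show "a = b"
      proof (rule ccontr)
        assume "a \<noteq> b"
        then consider "a < b" | "b < a" by linarith
        then show False
        proof cases
          case 1
          have "s a \<noteq> s b" by (rule cyc_dist) (use 1 a1 b1 Ei in linarith)+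
          then show False using e by simp
        next
          case 2
          have "s b \<noteq> s a" by (rule cyc_dist) (use 2 a1 b1 Ei in linarith)+
          then show False using e by simp
        qed
      qed
    qed
    then show ?thesis by (simp add: distinct_map)
  qed
  have per2: "r' (E + j) = map s [E'..<E' + per] ! (j mod per)" for j
  proof -
    have "map s [E'..<E' + per] ! (j mod per) = s (E' + j mod per)" using per_pos by simp
    also have "\<dots> = s (E' + j mod per + (j div per) * per)" using per_mult[of "E' + j mod per" "j div per"] Ei by simp
    also have "\<dots> = s (E' + j)" by (metis add.assoc mod_div_mult_eq)
    also have "\<dots> = r' (E + j)" unfolding s_def E_def by (simp add: add.assoc)
    finally show ?thesis by simp
  qed
  show ?thesis unfolding lasso_def
  proof (intro conjI allI impI)
    show "map r' [0..<Suc E] \<noteq> []" by simp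
    show "map s [E'..<E' + per] \<noteq> []" using per_pos by simp
    show "distinct (map s [E'..<E' + per])" by (rule dist)
    have c: "[E'..<E' + per] = E' # [Suc E'..<E' + per]" using per_pos by (simp add: upt_conv_Cons)
    show "hd (map s [E'..<E' + per]) = last (map r' [0..<Suc E])"
      unfolding c by (simp add: s_def E_def)
    fix i assume "i < length (map r' [0..<Suc E])"
    then show "r' i = map r' [0..<Suc E] ! i" by (simp del: upt_Suc)
  next
    fix j show "r' (length (map r' [0..<Suc E]) - 1 + j) = map s [E'..<E' + per] ! (j mod length (map s [E'..<E' + per]))"
      using per2[of j] by simp
  qed
qed

lemma constr: "\<exists>\<rho>'' \<pi> \<mu> \<eta>. \<rho>'' 0 = \<rho> 0 \<and> (\<forall>n. \<rho>'' n = \<rho> (\<pi> n) \<and> \<rho>'' (Suc n) = \<rho> (Suc (\<pi> n))) \<and>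
   (\<forall>\<alpha> n. (\<forall>k\<le>n. \<rho>'' k \<notin> target G \<alpha>) \<longrightarrow> (\<forall>k\<le>\<pi> n. \<rho> k \<notin> target G \<alpha>) \<and>
       play_cost G \<rho>'' \<alpha> + enat (Sm G \<rho> (\<pi> n) \<alpha>) \<le> play_cost G \<rho> \<alpha> + enat (Sm G \<rho>'' n \<alpha>)) \<and>
   lasso \<rho>'' \<mu> \<eta> \<and> length \<mu> - 1 \<le> card (UNIV :: 'p set) * card (UNIV :: 'v set) \<and>
   (\<forall>\<alpha>. (\<exists>n. \<rho>'' n \<in> target G \<alpha>) \<longrightarrow> set \<mu> \<inter> target G \<alpha> \<noteq> {})"
proof -
  have f3: "\<forall>\<alpha> n. (\<forall>k\<le>n. r' k \<notin> target G \<alpha>) \<longrightarrow> (\<forall>k\<le>pp n. \<rho> k \<notin> target G \<alpha>) \<and>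
       play_cost G r' \<alpha> + enat (Sm G \<rho> (pp n) \<alpha>) \<le> play_cost G \<rho> \<alpha> + enat (Sm G r' n \<alpha>)"
    using P3 by blast
  have f2: "\<forall>n. r' n = \<rho> (pp n) \<and> r' (Suc n) = \<rho> (Suc (pp n))" using r'_Suc unfolding r'_def by blast
  have f5: "length (map r' [0..<Suc E]) - 1 \<le> card (UNIV :: 'p set) * card (UNIV :: 'v set)" using Ebound by simp
  have f6: "\<forall>\<alpha>. (\<exists>n. r' n \<in> target G \<alpha>) \<longrightarrow> set (map r' [0..<Suc E]) \<inter> target G \<alpha> \<noteq> {}"
  proof (intro allI impI)
    fix \<alpha> assume "\<exists>n. r' n \<in> target G \<alpha>"
    then have "\<alpha> \<in> W" unfolding W_def r'_def by blast
    then obtain k where "k \<le> E" "r' k \<in> target G \<alpha>" using win by blast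
    then have "r' k \<in> set (map r' [0..<Suc E])" "r' k \<in> target G \<alpha>" unfolding set_map set_upt by auto
    then show "set (map r' [0..<Suc E]) \<inter> target G \<alpha> \<noteq> {}" by blast
  qed
  show ?thesis
    apply (rule exI[of _ r'], rule exI[of _ pp], rule exI[of _ "map r' [0..<Suc E]"], rule exI[of _ "map s [E'..<E' + per]"])
    using r'_0 f2 f3 lasso_r' f5 f6 by blast
qed

end



theorem corollary1:
  fixes G :: "('p::finite, 'v::finite, 'a) cgame" and c :: "'p \<Rightarrow> enat"
  assumes "wf_game G"
    and "c \<in> NE_PO G"
  shows "\<exists>P \<mu> \<eta>. is_NE G P \<and> cost G P = c \<and>
           lasso (outcome G P) \<mu> \<eta> \<and>
           length \<mu> - 1 \<le> card (UNIV :: 'p set) * card (UNIV :: 'v set) \<and>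
           (\<forall>\<alpha> \<in> winners G P. set \<mu> \<inter> target G \<alpha> \<noteq> {})"
proof -
  from assms(2) obtain P where NE: "is_NE G P" and cP: "cost G P = c"
    and PO: "\<forall>d\<in>NE_costs G. d \<le> c \<longrightarrow> d = c"
    unfolding NE_PO_def NE_costs_def by blast
  define \<rho> where "\<rho> = outcome G P"
  interpret LB G \<rho> .
  obtain \<rho>'' \<pi> \<mu> \<eta> where c0: "\<rho>'' 0 = \<rho> 0"
    and c1: "\<forall>n. \<rho>'' n = \<rho> (\<pi> n) \<and> \<rho>'' (Suc n) = \<rho> (Suc (\<pi> n))"
    and c2: "\<forall>\<alpha> n. (\<forall>k\<le>n. \<rho>'' k \<notin> target G \<alpha>) \<longrightarrow> (\<forall>k\<le>\<pi> n. \<rho> k \<notin> target G \<alpha>) \<and>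
       play_cost G \<rho>'' \<alpha> + enat (Sm G \<rho> (\<pi> n) \<alpha>) \<le> play_cost G \<rho> \<alpha> + enat (Sm G \<rho>'' n \<alpha>)"
    and c3: "lasso \<rho>'' \<mu> \<eta>"
    and c4: "length \<mu> - 1 \<le> card (UNIV :: 'p set) * card (UNIV :: 'v set)"
    and c5: "\<forall>\<alpha>. (\<exists>n. \<rho>'' n \<in> target G \<alpha>) \<longrightarrow> set \<mu> \<inter> target G \<alpha> \<noteq> {}"
    using constr by blast
  have r0: "\<rho>'' 0 = init G" using c0 unfolding \<rho>_def by (simp add: outcome_0)
  have edge: "\<And>n. \<rho>'' n = outcome G P (\<pi> n) \<and> \<rho>'' (Suc n) = outcome G P (Suc (\<pi> n))"
    using c1 unfolding \<rho>_def by blast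
  have p3: "\<And>\<alpha> n. (\<forall>k\<le>n. \<rho>'' k \<notin> target G \<alpha>) \<Longrightarrow>
              (\<forall>k\<le>\<pi> n. outcome G P k \<notin> target G \<alpha>) \<and>
              play_cost G \<rho>'' \<alpha> + enat (Sm G (outcome G P) (\<pi> n) \<alpha>) \<le> play_cost G (outcome G P) \<alpha> + enat (Sm G \<rho>'' n \<alpha>)"
    using c2 unfolding \<rho>_def by blast
  obtain P' where NE': "is_NE G P'" and out': "outcome G P' = \<rho>''"
    using game_lemma[OF NE r0 edge p3] by blast
  have le: "cost G P' \<le> c"
  proof (rule le_funI)
    fix \<alpha>
    show "cost G P' \<alpha> \<le> c \<alpha>"
    proof (cases "\<rho>'' 0 \<in> target G \<alpha>")
      case True
      then have "(LEAST n. \<rho>'' n \<in> target G \<alpha>) = 0" by (simp add: Least_eq_0)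
      then have "play_cost G \<rho>'' \<alpha> = 0" unfolding play_cost_def using True by (auto simp: zero_enat_def)
      then show ?thesis unfolding cost_def out' by simp
    next
      case False
      then have "\<forall>k\<le>0. \<rho>'' k \<notin> target G \<alpha>" by simp
      then have "play_cost G \<rho>'' \<alpha> + enat (Sm G \<rho> (\<pi> 0) \<alpha>) \<le> play_cost G \<rho> \<alpha> + enat (Sm G \<rho>'' 0 \<alpha>)"
        using c2 by blast
      moreover have "Sm G \<rho>'' 0 \<alpha> = 0" unfolding Sm_def by simp
      moreover have "play_cost G \<rho> \<alpha> = c \<alpha>" using cP unfolding cost_def \<rho>_def by auto
      ultimately have "play_cost G \<rho>'' \<alpha> + enat (Sm G \<rho> (\<pi> 0) \<alpha>) \<le> c \<alpha>" by (simp add: zero_enat_def[symmetric])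
      moreover have "play_cost G \<rho>'' \<alpha> \<le> play_cost G \<rho>'' \<alpha> + enat (Sm G \<rho> (\<pi> 0) \<alpha>)" by simp
      ultimately show ?thesis unfolding cost_def out' by (meson order_trans)
    qed
  qed
  have "cost G P' \<in> NE_costs G" using NE' unfolding NE_costs_def by blast
  then have eq: "cost G P' = c" using PO le by blast
  have "\<forall>\<alpha> \<in> winners G P'. set \<mu> \<inter> target G \<alpha> \<noteq> {}"
    using c5 unfolding winners_def out' by blast
  then show ?thesis using NE' eq c3 c4 out' by blast
qed


end
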